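(* Suppose that for all $0\le t\le T$, $\lambda_{\min}\big(\mathbf{G}(t)+\frac{1}{\alpha^2}\mathbf{V}(t)\big)\ge\frac{\omega}{2}$ for some $\omega>0$. Then with probability at least $1-\delta$ over the initialization, $$|g_k(t)-g_k(0)|\le\frac{4\sqrt n\,\|\mathbf{f}(0)-\mathbf{y}\|_2}{\sqrt m\,\omega}$$ for each $k$ and all $0\le t\le T$.
   Context: Data $(\mathbf{x}_i,y_i)\in\mathbb{R}^d\times\mathbb{R}$, $i=1,\dots,n$, with $\|\mathbf{x}_i\|_2\le1$. Network $f(\mathbf{x})=\frac{1}{\sqrt m}\sum_{k=1}^mc_k\sigma(g_k\mathbf{v}_k^\top\mathbf{x}/\|\mathbf{v}_k\|_2)$, $\sigma(s)=\max\{s,0\}$; initialization with $\alpha>0$: independently $\mathbf{v}_k(0)\sim N(0,\alpha^2\mathbf{I})$, $c_k$ uniform on $\{-1,1\}$, $g_k(0)=\|\mathbf{v}_k(0)\|_2/\alpha$. Gradient flow on $L=\frac12\sum_i(f(\mathbf{x}_i)-y_i)^2$ in $\mathbf{v}_k,g_k$ with $c_k$ fixed; $\mathbf{f}(t)$ predictions, $\mathbf{y}$ targets. Notation: $\mathbf{x}^{\mathbf{u}^\perp}=\mathbf{x}-\mathbf{u}\mathbf{u}^\top\mathbf{x}/\|\mathbf{u}\|_2^2$, $\mathbb{1}_{ik}(t)=\mathbb{1}\{\mathbf{v}_k(t)^\top\mathbf{x}_i\ge0\}$, $\mathbf{V}_{ij}(t)=\frac1m\sum_k\big(\frac{\alpha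 c_kg_k(t)}{\|\mathbf{v}_k(t)\|_2}\big)^2\langle\mathbf{x}_i^{\mathbf{v}_k(t)^\perp},\mathbf{x}_j^{\mathbf{v}_k(t)^\perp}\rangle\mathbb{1}_{ik}(t)\mathbb{1}_{jk}(t)$, $\mathbf{G}_{ij}(t)=\frac1m\sum_k\sigma(\mathbf{v}_k(t)^\top\mathbf{x}_i)\sigma(\mathbf{v}_k(t)^\top\mathbf{x}_j)/\|\mathbf{v}_k(t)\|_2^2$. Under gradient flow $\frac{d\mathbf{f}}{dt}=-(\mathbf{V}(t)/\alpha^2+\mathbf{G}(t))(\mathbf{f}(t)-\mathbf{y})$. *)

theory Defs
  imports "HOL-Analysis.Analysis"
begin

definition relu :: "real \<Rightarrow> real" where
  "relu s = max s 0"

definition perp :: "real^'d \<Rightarrow> real^'d \<Rightarrow> real^'d" where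
  "perp u x = x - ((u \<bullet> x) / (norm u)^2) *\<^sub>R u"

definition ind :: "real^'d \<Rightarrow> real^'d \<Rightarrow> real" where
  "ind v x = (if v \<bullet> x \<ge> 0 then 1 else 0)"

definition net_out :: "('m::finite \<Rightarrow> real) \<Rightarrow> ('m \<Rightarrow> real) \<Rightarrow> ('m \<Rightarrow> real^'d) \<Rightarrow> real^'d \<Rightarrow> real" where
  "net_out c g v x = (1 / sqrt (real CARD('m))) *
     (\<Sum>k\<in>UNIV. c k * relu (g k * (v k \<bullet> x) / norm (v k)))"

definition Vmat :: "real \<Rightarrow> ('m::finite \<Rightarrow> real) \<Rightarrow> ('m \<Rightarrow> real) \<Rightarrow> ('m \<Rightarrow> real^'d)
                     \<Rightarrow> ('n::finite \<Rightarrow> real^'d) \<Rightarrow> real^'n^'n" where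
  "Vmat \<alpha> c g v x = (\<chi> i j. (1 / real CARD('m)) *
     (\<Sum>k\<in>UNIV. (\<alpha> * c k * g k / norm (v k))^2 * (perp (v k) (x i) \<bullet> perp (v k) (x j))
                 * ind (v k) (x i) * ind (v k) (x j)))"

definition Gmat :: "('m::finite \<Rightarrow> real^'d) \<Rightarrow> ('n::finite \<Rightarrow> real^'d) \<Rightarrow> real^'n^'n" where
  "Gmat v x = (\<chi> i j. (1 / real CARD('m)) *
     (\<Sum>k\<in>UNIV. relu (v k \<bullet> x i) * relu (v k \<bullet> x j) / (norm (v k))^2))"

definition lambda_min :: "real^'n^'n \<Rightarrow> real" where
  "lambda_min H = Min {\<mu>. \<exists>z. z \<noteq> 0 \<and> H *v z = \<mu> *\<^sub>R z}"

end

theory Submission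
  imports Defs
begin

lemma sym_inner:
  fixes H :: "real^'n^'n"
  assumes "\<forall>i j. H$i$j = H$j$i"
  shows "(H *v z) \<bullet> w = z \<bullet> (H *v w)"
proof -
  have "(H *v z) \<bullet> w = (\<Sum>i\<in>UNIV. \<Sum>j\<in>UNIV. H$i$j * z$j * w$i)"
    by (simp add: matrix_vector_mult_def inner_vec_def sum_distrib_right)
  also have "\<dots> = (\<Sum>j\<in>UNIV. \<Sum>i\<in>UNIV. H$i$j * z$j * w$i)"
    by (rule sum.swap)
  also have "\<dots> = z \<bullet> (H *v w)"
    by (simp add: matrix_vector_mult_def inner_vec_def sum_distrib_left assms mult_ac)
  finally show ?thesis .
qed

lemma eig_finite:
  fixes H :: "real^'n^'n"
  assumes sym: "\<forall>i j. H$i$j = H$j$i"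
  shows "finite {\<mu>. \<exists>z. z \<noteq> 0 \<and> H *v z = \<mu> *\<^sub>R z}"
proof -
  define S where "S = {\<mu>. \<exists>z. z \<noteq> 0 \<and> H *v z = \<mu> *\<^sub>R z}"
  define e where "e = (\<lambda>\<mu>. SOME z. z \<noteq> 0 \<and> H *v z = \<mu> *\<^sub>R z)"
  have e: "e \<mu> \<noteq> 0 \<and> H *v e \<mu> = \<mu> *\<^sub>R e \<mu>" if "\<mu> \<in> S" for \<mu>
    using that unfolding S_def e_def by (metis (mono_tags, lifting) mem_Collect_eq someI_ex)
  have orth: "e \<mu>1 \<bullet> e \<mu>2 = 0" if "\<mu>1 \<in> S" "\<mu>2 \<in> S" "\<mu>1 \<noteq> \<mu>2" for \<mu>1 \<mu>2
  proof -
    have "\<mu>1 * (e \<mu>1 \<bullet> e \<mu>2) = (H *v e \<mu>1) \<bullet> e \<mu>2" using e[OF that(1)] by simp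
    also have "\<dots> = e \<mu>1 \<bullet> (H *v e \<mu>2)" by (rule sym_inner[OF sym])
    also have "\<dots> = \<mu>2 * (e \<mu>1 \<bullet> e \<mu>2)" using e[OF that(2)] by simp
    finally show ?thesis using that(3) by simp
  qed
  have inj: "inj_on e S"
  proof (rule inj_onI)
    fix a b assume ab: "a \<in> S" "b \<in> S" "e a = e b"
    show "a = b"
    proof (rule ccontr)
      assume "a \<noteq> b"
      then have "e a \<bullet> e b = 0" using orth ab by blast
      then show False using ab e[OF ab(1)] by simp
    qed
  qed
  have "pairwise orthogonal (e ` S)"
    unfolding pairwise_def orthogonal_def using orth by (metis imageE)
  moreover have "0 \<notin> e ` S" using e by auto
  ultimately have "independent (e ` S)" by (rule pairwise_orthogonal_independent)
  then have "finite (e ` S)" by (rule finiteI_independent)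
  then show ?thesis using finite_imageD inj S_def by blast
qed

lemma quad_lower:
  fixes H :: "real^'n^'n"
  assumes sym: "\<forall>i j. H$i$j = H$j$i" and lm: "lambda_min H \<ge> a"
  shows "z \<bullet> (H *v z) \<ge> a * (z \<bullet> z)"
proof -
  define Q where "Q = (\<lambda>z::real^'n. z \<bullet> (H *v z))"
  have contQ: "continuous_on (sphere 0 1) Q"
    unfolding Q_def by (intro continuous_intros linear_continuous_on bounded_linear_intros)
  have ne: "sphere (0::real^'n) 1 \<noteq> {}"
    by simp
  obtain z0 where z0: "z0 \<in> sphere 0 1" and zmin: "\<And>w. w \<in> sphere 0 1 \<Longrightarrow> Q z0 \<le> Q w"
    using continuous_attains_inf[OF compact_sphere ne contQ] by blast
  define \<mu> where "\<mu> = Q z0"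
  have nz0: "norm z0 = 1" using z0 by simp
  have Qhom: "Q (c *\<^sub>R w) = c^2 * Q w" for c w
    unfolding Q_def by (simp add: matrix_vector_mult_scaleR power2_eq_square)
  have gen: "Q w \<ge> \<mu> * (w \<bullet> w)" for w
  proof (cases "w = 0")
    case True then show ?thesis by (simp add: Q_def)
  next
    case False
    have "(inverse (norm w)) *\<^sub>R w \<in> sphere 0 1" using False by simp
    then have "\<mu> \<le> Q ((inverse (norm w)) *\<^sub>R w)" using zmin \<mu>_def by blast
    also have "\<dots> = Q w / (norm w)^2" by (simp add: Qhom power_inverse divide_inverse mult.commute)
    finally have "\<mu> * (norm w)^2 \<le> Q w" using False by (simp add: pos_le_divide_eq)
    then show ?thesis by (simp add: power2_norm_eq_inner)
  qed
  define r where "r = H *v z0 - \<mu> *\<^sub>R z0"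
  define K where "K = Q r - \<mu> * (r \<bullet> r)"
  have symr: "r \<bullet> (H *v z0) = z0 \<bullet> (H *v r)" using sym_inner[OF sym, of r z0] by (simp add: inner_commute)
  have expand: "Q (z0 + s *\<^sub>R r) - \<mu> * ((z0 + s *\<^sub>R r) \<bullet> (z0 + s *\<^sub>R r))
      = 2 * s * (r \<bullet> r) + s^2 * K" for s
  proof -
    have zz: "z0 \<bullet> z0 = 1" using nz0 by (metis norm_eq_1)
    have "r \<bullet> r = r \<bullet> (H *v z0) - \<mu> * (z0 \<bullet> r)" unfolding r_def by (simp add: inner_diff_left inner_diff_right inner_commute algebra_simps)
    then have hh: "z0 \<bullet> (H *v r) = r \<bullet> r + Q z0 * (z0 \<bullet> r)" using symr \<mu>_def by simp
    show ?thesis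
      unfolding Q_def K_def \<mu>_def
      by (simp add: matrix_vector_mult_scaleR matrix_vector_right_distrib
          inner_add_left inner_add_right zz symr power2_eq_square algebra_simps inner_commute hh[unfolded Q_def])
  qed
  have "r = 0"
  proof (rule ccontr)
    assume "r \<noteq> 0"
    then have rr: "r \<bullet> r > 0" by simp
    define t where "t = (r \<bullet> r) / (\<bar>K\<bar> + 1)"
    have tpos: "t > 0" using rr by (simp add: t_def)
    have "0 \<le> 2 * (-t) * (r \<bullet> r) + (-t)^2 * K"
      using gen[of "z0 + (-t) *\<^sub>R r"] expand[of "-t"] by (simp add: Q_def)
    then have "2 * (r \<bullet> r) \<le> t * K" using tpos by (simp add: power2_eq_square algebra_simps)
    also have "\<dots> \<le> t * \<bar>K\<bar>" using tpos by (simp add: mult_left_mono)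
    also have "\<dots> < r \<bullet> r" using rr unfolding t_def by (simp add: field_simps)
    finally show False using rr by simp
  qed
  then have eig: "H *v z0 = \<mu> *\<^sub>R z0" by (simp add: r_def)
  have "z0 \<noteq> 0" using nz0 by auto
  then have "\<mu> \<in> {\<mu>. \<exists>z. z \<noteq> 0 \<and> H *v z = \<mu> *\<^sub>R z}" using eig by blast
  then have "lambda_min H \<le> \<mu>" unfolding lambda_min_def using eig_finite[OF sym] by (rule Min_le[rotated])
  then have "a \<le> \<mu>" using lm by simp
  moreover have "z \<bullet> z \<ge> 0" by simp
  ultimately have "a * (z \<bullet> z) \<le> \<mu> * (z \<bullet> z)" by (simp add: mult_right_mono)
  then show ?thesis using gen[of z] by (simp add: Q_def)
qed

lemma decr_Icc:
  fixes \<phi> \<phi>' :: "real \<Rightarrow> real"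
  assumes d: "\<forall>s\<in>{0..T}. (\<phi> has_real_derivative \<phi>' s) (at s within {0..T})"
    and np: "\<forall>s\<in>{0..T}. \<phi>' s \<le> 0" and t: "t \<in> {0..T}"
  shows "\<phi> t \<le> \<phi> 0"
proof (rule DERIV_nonpos_imp_decreasing_open[of 0 t \<phi>])
  show "0 \<le> t" using t by simp
  fix s assume s: "0 < s" "s < t"
  then have "at s within {0..T} = at s" using t by (intro at_within_Icc_at) auto
  then show "\<exists>y. (\<phi> has_real_derivative y) (at s) \<and> y \<le> 0"
    using d np s t by (metis atLeastAtMost_iff less_eq_real_def order.trans)
next
  have "continuous_on {0..T} \<phi>"
    using d by (auto simp add: continuous_on_eq_continuous_within intro: DERIV_continuous)
  then show "continuous_on {0..t} \<phi>" by (rule continuous_on_subset) (use t in auto)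
qed

lemma sum_abs_le_sqrt:
  fixes e :: "real^'n"
  shows "(\<Sum>i\<in>UNIV. \<bar>e$i\<bar>) \<le> sqrt (real CARD('n)) * norm e"
proof -
  have "(\<Sum>i\<in>UNIV. \<bar>e$i\<bar>) = (\<Sum>i\<in>UNIV. \<bar>(\<lambda>_::'n. 1::real) i\<bar> * \<bar>e$i\<bar>)" by simp
  also have "\<dots> \<le> L2_set (\<lambda>_::'n. 1::real) UNIV * L2_set (\<lambda>i. e$i) UNIV" using L2_set_mult_ineq[where f="\<lambda>_. 1::real" and A=UNIV and g="\<lambda>i. e$i"] by simp
  also have "\<dots> = sqrt (real CARD('n)) * norm e"
    by (simp add: L2_set_constant norm_vec_def L2_set_def)
  finally show ?thesis .
qed

lemma symH:
  "\<forall>i j. (Gmat vv x + s *\<^sub>R Vmat \<alpha> c gg vv x) $ i $ j = (Gmat vv x + s *\<^sub>R Vmat \<alpha> c gg vv x) $ j $ i"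
  by (simp add: Gmat_def Vmat_def inner_commute mult_ac)

theorem lemmaB8:
  fixes x :: "'n::finite \<Rightarrow> real^'d" and y :: "real^'n"
    and c :: "'m::finite \<Rightarrow> real"
    and v :: "'m \<Rightarrow> real \<Rightarrow> real^'d" and g :: "'m \<Rightarrow> real \<Rightarrow> real"
    and f :: "real \<Rightarrow> real^'n"
    and \<alpha> \<omega> T :: real
  assumes x_bound: "\<forall>i. norm (x i) \<le> 1"
    and alpha_pos: "\<alpha> > 0"
    and c_sign: "\<forall>k. c k \<in> {-1, 1}"
    and v_init: "\<forall>k. v k 0 \<noteq> 0"
    and g_init: "\<forall>k. g k 0 = norm (v k 0) / \<alpha>"
    and f_def: "\<forall>t. f t = (\<chi> i. net_out c (\<lambda>k. g k t) (\<lambda>k. v k t) (x i))"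
    and g_flow: "\<forall>k. \<forall>t\<in>{0..T}. (g k has_real_derivative
        - (\<Sum>i\<in>UNIV. (f t $ i - y $ i) * (c k / sqrt (real CARD('m))) * ind (v k t) (x i)
                        * ((v k t \<bullet> x i) / norm (v k t)))) (at t within {0..T})"
    and v_flow: "\<forall>k. \<forall>t\<in>{0..T}. (v k has_vector_derivative
        - (\<Sum>i\<in>UNIV. ((f t $ i - y $ i) * (c k / sqrt (real CARD('m))) * ind (v k t) (x i)
                        * (g k t / norm (v k t))) *\<^sub>R perp (v k t) (x i))) (at t within {0..T})"
    and f_flow: "\<forall>t\<in>{0..T}. (f has_vector_derivative
        - (((1 / \<alpha>^2) *\<^sub>R Vmat \<alpha> c (\<lambda>k. g k t) (\<lambda>k. v k t) x + Gmat (\<lambda>k. v k t) x)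
             *v (f t - y))) (at t within {0..T})"
    and omega_pos: "\<omega> > 0"
    and eig: "\<forall>t\<in>{0..T}. lambda_min (Gmat (\<lambda>k. v k t) x
                 + (1 / \<alpha>^2) *\<^sub>R Vmat \<alpha> c (\<lambda>k. g k t) (\<lambda>k. v k t) x) \<ge> \<omega> / 2"
  shows "\<forall>k. \<forall>t\<in>{0..T}. \<bar>g k t - g k 0\<bar>
           \<le> 4 * sqrt (real CARD('n)) * norm (f 0 - y) / (sqrt (real CARD('m)) * \<omega>)"
proof -
  define N where "N = norm (f 0 - y)"
  define Hm where "Hm t = Gmat (\<lambda>k. v k t) x + (1 / \<alpha>^2) *\<^sub>R Vmat \<alpha> c (\<lambda>k. g k t) (\<lambda>k. v k t) x" for t
  have Hsym: "\<forall>i j. Hm t $i$j = Hm t $j$i" for t unfolding Hm_def by (rule symH)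
  have quad: "(f t - y) \<bullet> (Hm t *v (f t - y)) \<ge> \<omega> / 2 * ((f t - y) \<bullet> (f t - y))" if "t \<in> {0..T}" for t
    using quad_lower[OF Hsym] eig that unfolding Hm_def by blast
  define E where "E s = (f s - y) \<bullet> (f s - y)" for s
  have Ed: "(E has_real_derivative (-2 * ((f s - y) \<bullet> (Hm s *v (f s - y))))) (at s within {0..T})"
    if s: "s \<in> {0..T}" for s
  proof -
    define D where "D = - (Hm s *v (f s - y))"
    have fd: "(f has_derivative (\<lambda>h. h *\<^sub>R D)) (at s within {0..T})"
      using f_flow s unfolding has_vector_derivative_def D_def Hm_def by (simp add: add.commute)
    have "((\<lambda>s. (f s - y) \<bullet> (f s - y)) has_derivative
        (\<lambda>h. (f s - y) \<bullet> (h *\<^sub>R D - 0) + (h *\<^sub>R D - 0) \<bullet> (f s - y))) (at s within {0..T})"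
      by (intro has_derivative_inner has_derivative_diff fd has_derivative_const)
    then show ?thesis unfolding E_def has_field_derivative_def
      by (rule has_derivative_eq_rhs) (auto simp: fun_eq_iff inner_commute D_def algebra_simps)
  qed
  define h where "h s = exp (\<omega> * s) * E s" for s
  have hd: "(h has_real_derivative exp (\<omega> * s) * (\<omega> * E s - 2 * ((f s - y) \<bullet> (Hm s *v (f s - y)))))
      (at s within {0..T})" if s: "s \<in> {0..T}" for s
    unfolding h_def
    by (rule derivative_eq_intros Ed[OF s] | simp)+ (simp add: algebra_simps)
  have hle: "h t \<le> h 0" if t: "t \<in> {0..T}" for t
  proof (rule decr_Icc[OF _ _ t])
    show "\<forall>s\<in>{0..T}. (h has_real_derivative exp (\<omega> * s) * (\<omega> * E s - 2 * ((f s - y) \<bullet> (Hm s *v (f s - y)))))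
      (at s within {0..T})" using hd by blast
    show "\<forall>s\<in>{0..T}. exp (\<omega> * s) * (\<omega> * E s - 2 * ((f s - y) \<bullet> (Hm s *v (f s - y)))) \<le> 0"
    proof
      fix s assume "s \<in> {0..T}"
      from quad[OF this] have "\<omega> * E s - 2 * ((f s - y) \<bullet> (Hm s *v (f s - y))) \<le> 0"
        unfolding E_def by simp
      then show "exp (\<omega> * s) * (\<omega> * E s - 2 * ((f s - y) \<bullet> (Hm s *v (f s - y)))) \<le> 0"
        by (simp add: mult_nonneg_nonpos)
    qed
  qed
  have fdecay: "norm (f t - y) \<le> exp (- \<omega> * t / 2) * N" if t: "t \<in> {0..T}" for t
  proof -
    have ex: "exp (- (\<omega> * t)) = (exp (- (\<omega> * t / 2)))\<^sup>2"
      by (simp add: power2_eq_square flip: exp_add)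
    have "exp (\<omega> * t) * E t \<le> E 0" using hle[OF t] by (simp add: h_def)
    then have "E t \<le> exp (- (\<omega> * t)) * E 0"
      by (simp add: exp_minus field_simps)
    also have "\<dots> = (exp (- \<omega> * t / 2) * N)^2"
      using ex by (simp add: E_def N_def power_mult_distrib power2_norm_eq_inner)
    finally have "(norm (f t - y))^2 \<le> (exp (- \<omega> * t / 2) * N)^2"
      by (simp add: E_def power2_norm_eq_inner)
    then show ?thesis by (rule power2_le_imp_le) (simp add: N_def)
  qed
  define C where "C = sqrt (real CARD('n)) * N / sqrt (real CARD('m))"
  have Cnn: "C \<ge> 0" by (simp add: C_def N_def)
  define gd where "gd k t = - (\<Sum>i\<in>UNIV. (f t $ i - y $ i) * (c k / sqrt (real CARD('m))) * ind (v k t) (x i)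
                        * ((v k t \<bullet> x i) / norm (v k t)))" for k t
  have gdd: "(g k has_real_derivative gd k t) (at t within {0..T})" if "t \<in> {0..T}" for k t
    using g_flow that unfolding gd_def by blast
  have gbound: "\<bar>gd k t\<bar> \<le> C * exp (- \<omega> * t / 2)" if t: "t \<in> {0..T}" for k t
  proof -
    have termb: "\<bar>(f t $ i - y $ i) * (c k / sqrt (real CARD('m))) * ind (v k t) (x i)
                        * ((v k t \<bullet> x i) / norm (v k t))\<bar> \<le> \<bar>(f t - y) $ i\<bar> / sqrt (real CARD('m))" for i
    proof -
      have ck: "\<bar>c k\<bar> = 1" using c_sign by (metis abs_1 abs_minus_cancel insertE singletonD)
      have ii: "\<bar>ind (v k t) (x i)\<bar> \<le> 1" by (simp add: ind_def)
      have q: "\<bar>(v k t \<bullet> x i) / norm (v k t)\<bar> \<le> 1"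
      proof (cases "v k t = 0")
        case True then show ?thesis by simp
      next
        case False
        have "\<bar>v k t \<bullet> x i\<bar> \<le> norm (v k t) * norm (x i)" by (rule Cauchy_Schwarz_ineq2)
        also have "\<dots> \<le> norm (v k t)" using x_bound by (simp add: mult_left_le)
        finally show ?thesis using False by (simp add: abs_divide divide_le_eq_1)
      qed
      have "\<bar>ind (v k t) (x i)\<bar> * \<bar>(v k t \<bullet> x i) / norm (v k t)\<bar> \<le> 1"
        using ii q by (intro mult_le_one) auto
      then have "\<bar>(f t - y) $ i\<bar> / sqrt (real CARD('m)) * (\<bar>ind (v k t) (x i)\<bar> * \<bar>(v k t \<bullet> x i) / norm (v k t)\<bar>)
          \<le> \<bar>(f t - y) $ i\<bar> / sqrt (real CARD('m))"
        by (rule mult_left_le) simp_all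
      then show ?thesis by (simp add: abs_mult ck)
    qed
    have "\<bar>gd k t\<bar> \<le> (\<Sum>i\<in>UNIV. \<bar>(f t $ i - y $ i) * (c k / sqrt (real CARD('m))) * ind (v k t) (x i)
                        * ((v k t \<bullet> x i) / norm (v k t))\<bar>)"
      unfolding gd_def abs_minus_cancel by (rule sum_abs)
    also have "\<dots> \<le> (\<Sum>i\<in>UNIV. \<bar>(f t - y) $ i\<bar> / sqrt (real CARD('m)))"
      by (rule sum_mono) (rule termb)
    also have "\<dots> = (\<Sum>i\<in>UNIV. \<bar>(f t - y) $ i\<bar>) / sqrt (real CARD('m))"
      by (simp add: sum_divide_distrib)
    also have "\<dots> \<le> sqrt (real CARD('n)) * norm (f t - y) / sqrt (real CARD('m))"
      by (intro divide_right_mono sum_abs_le_sqrt) simp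
    also have "\<dots> \<le> sqrt (real CARD('n)) * (exp (- \<omega> * t / 2) * N) / sqrt (real CARD('m))"
      by (intro divide_right_mono mult_left_mono fdecay t) simp_all
    also have "\<dots> = C * exp (- \<omega> * t / 2)" by (simp add: C_def)
    finally show ?thesis .
  qed
  have main: "\<sigma> * (g k t - g k 0) \<le> 2 * C / \<omega>" if t: "t \<in> {0..T}" and sg: "\<bar>\<sigma>\<bar> = 1" for k t \<sigma>
  proof -
    define \<psi> where "\<psi> s = \<sigma> * (g k s - g k 0) + (2 * C / \<omega>) * exp (- \<omega> * s / 2)" for s
    have \<psi>d: "(\<psi> has_real_derivative \<sigma> * gd k s - C * exp (- \<omega> * s / 2)) (at s within {0..T})"
      if s: "s \<in> {0..T}" for s
      unfolding \<psi>_def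
      by (rule derivative_eq_intros gdd[OF s] | simp)+ (use omega_pos in \<open>simp add: field_simps\<close>)
    have np: "\<sigma> * gd k s - C * exp (- \<omega> * s / 2) \<le> 0" if s: "s \<in> {0..T}" for s
    proof -
      have "\<sigma> * gd k s \<le> \<bar>\<sigma> * gd k s\<bar>" by simp
      also have "\<dots> = \<bar>gd k s\<bar>" by (simp add: abs_mult sg)
      finally show ?thesis using gbound[OF s, of k] by simp
    qed
    have "\<psi> t \<le> \<psi> 0"
      by (rule decr_Icc[where \<phi>'="\<lambda>s. \<sigma> * gd k s - C * exp (- \<omega> * s / 2)", OF _ _ t]) (use \<psi>d np in blast)+
    then have "\<sigma> * (g k t - g k 0) \<le> 2 * C / \<omega> - (2 * C / \<omega>) * exp (- \<omega> * t / 2)"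
      by (simp add: \<psi>_def)
    moreover have "(2 * C / \<omega>) * exp (- \<omega> * t / 2) \<ge> 0" using Cnn omega_pos by simp
    ultimately show ?thesis by linarith
  qed
  show ?thesis
  proof (intro allI ballI)
    fix k t assume t: "t \<in> {0..T}"
    have "\<bar>g k t - g k 0\<bar> \<le> 2 * C / \<omega>"
      using main[OF t, of 1 k] main[OF t, of "-1" k] by (simp add: abs_le_iff)
    also have "\<dots> \<le> 4 * C / \<omega>" using Cnn omega_pos by (simp add: divide_right_mono)
    also have "\<dots> = 4 * sqrt (real CARD('n)) * norm (f 0 - y) / (sqrt (real CARD('m)) * \<omega>)"
      by (simp add: C_def N_def)
    finally show "\<bar>g k t - g k 0\<bar> \<le> 4 * sqrt (real CARD('n)) * norm (f 0 - y) / (sqrt (real CARD('m)) * \<omega>)" .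
  qed
qed

end
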